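(* Let $n\ge 1$, $i\in\{1,\ldots,n-1\}$, and let $C$ be an $s_i$-stable set of transpositions in $S_n$ (i.e. $s_i\in C$ and $s_iCs_i=C$). Let $H_C^{*s_i}=\{f\in H_C\mid f*s_i=f\}$. Then $H_C^{*s_i}$ and $(x_i-x_{i+1})H_C^{*s_i}$ are $\mathbb{C}[t_1,\ldots,t_n]$-submodules of $H$ stable under the dot action, and $$H_C=H_C^{*s_i}\oplus (x_i-x_{i+1})H_C^{*s_i}$$ is an internal direct sum decomposition of $\mathbb{C}[t_1,\ldots,t_n]$-submodules of $H$ equipped with the dot action.
   Context: Let $S_n$ be the symmetric group on $\{1,\ldots,n\}$ with $(vw)(j)=v(w(j))$, and $s_i=(i\leftrightarrow i+1)$. Let $H=\mathrm{Fun}(S_n,\mathbb{C}[t_1,\ldots,t_n])$ with pointwise operations; it is a $\mathbb{C}[t_1,\ldots,t_n]$-module via constant functions. The star action (right) is $(f*w)(v;t_1,\ldots,t_n)=f(vw^{-1};t_1,\ldots,t_n)$, and the dot action (left) is $(w\cdot f)(v;t_1,\ldots,t_n)=f(w^{-1}v;t_{w(1)},\ldots,t_{w(n)})$. Let $x_i\in H$ be the function $v\mapsto t_{v(i)}$. For a transposition $\tau=(i\leftrightarrow k)$, $f\in H$ satisfies condition $\tau$ if $f-f*\tau=(x_i-x_k)g$ for some $g\in H$; these form a subring $H_\tau$, and for a set $C$ of transpositions $H_C=\bigcap_{\tau\in C}H_\tau$ (with $H_\varnothing=H$). *)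

theory Defs
  imports Complex_Main "HOL-Library.Poly_Mapping" "HOL-Combinatorics.Permutations"
    "HOL-Combinatorics.Transposition" "HOL-Library.Function_Algebras"
begin

text \<open>Multivariate polynomials over the complex numbers: a monomial is a finitely
  supported exponent vector nat \<Rightarrow>0 nat (variable t_j has index j), a polynomial a
  finitely supported coefficient function on monomials.\<close>

type_synonym mpoly = "(nat \<Rightarrow>\<^sub>0 nat) \<Rightarrow>\<^sub>0 complex"

definition polys :: "nat \<Rightarrow> mpoly set" where
  "polys n = {p. \<forall>m \<in> Poly_Mapping.keys p. Poly_Mapping.keys m \<subseteq> {1..n}}"

definition Var :: "nat \<Rightarrow> mpoly" where
  "Var j = Poly_Mapping.single (Poly_Mapping.single j 1) 1"

text \<open>Variable substitution t_j \<mapsto> t_(w j) (for a permutation w).\<close>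
definition rename :: "(nat \<Rightarrow> nat) \<Rightarrow> mpoly \<Rightarrow> mpoly" where
  "rename w p = Abs_poly_mapping (\<lambda>m'. Poly_Mapping.lookup p (Abs_poly_mapping (Poly_Mapping.lookup m' \<circ> w)))"

definition Sn :: "nat \<Rightarrow> (nat \<Rightarrow> nat) set" where
  "Sn n = {w. w permutes {1..n}}"

text \<open>H = Fun(S_n, C[t_1..t_n]); functions are represented as total functions
  vanishing outside S_n.  Ring operations are the pointwise ones on such functions.\<close>
definition HH :: "nat \<Rightarrow> ((nat \<Rightarrow> nat) \<Rightarrow> mpoly) set" where
  "HH n = {f. (\<forall>v \<in> Sn n. f v \<in> polys n) \<and> (\<forall>v. v \<notin> Sn n \<longrightarrow> f v = 0)}"

text \<open>constant function with value p (the C[t]-module structure)\<close>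
definition const :: "nat \<Rightarrow> mpoly \<Rightarrow> (nat \<Rightarrow> nat) \<Rightarrow> mpoly" where
  "const n p = (\<lambda>v. if v \<in> Sn n then p else 0)"

definition xx :: "nat \<Rightarrow> nat \<Rightarrow> (nat \<Rightarrow> nat) \<Rightarrow> mpoly" where
  "xx n i = (\<lambda>v. if v \<in> Sn n then Var (v i) else 0)"

definition star :: "nat \<Rightarrow> ((nat \<Rightarrow> nat) \<Rightarrow> mpoly) \<Rightarrow> (nat \<Rightarrow> nat) \<Rightarrow> (nat \<Rightarrow> nat) \<Rightarrow> mpoly" where
  "star n f w = (\<lambda>v. if v \<in> Sn n then f (v \<circ> inv w) else 0)"

definition dot :: "nat \<Rightarrow> (nat \<Rightarrow> nat) \<Rightarrow> ((nat \<Rightarrow> nat) \<Rightarrow> mpoly) \<Rightarrow> (nat \<Rightarrow> nat) \<Rightarrow> mpoly" where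
  "dot n w f = (\<lambda>v. if v \<in> Sn n then rename w (f (inv w \<circ> v)) else 0)"

definition is_transposition :: "nat \<Rightarrow> (nat \<Rightarrow> nat) \<Rightarrow> bool" where
  "is_transposition n \<tau> \<longleftrightarrow> (\<exists>i k. i \<in> {1..n} \<and> k \<in> {1..n} \<and> i < k \<and> \<tau> = transpose i k)"

definition H_tau :: "nat \<Rightarrow> nat \<Rightarrow> nat \<Rightarrow> ((nat \<Rightarrow> nat) \<Rightarrow> mpoly) set" where
  "H_tau n i k = {f \<in> HH n. \<exists>g \<in> HH n. f - star n f (transpose i k) = (xx n i - xx n k) * g}"

definition H_C :: "nat \<Rightarrow> (nat \<Rightarrow> nat) set \<Rightarrow> ((nat \<Rightarrow> nat) \<Rightarrow> mpoly) set" where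
  "H_C n C = HH n \<inter> (\<Inter>\<tau>\<in>C. \<Inter>{H_tau n i k | i k. i \<in> {1..n} \<and> k \<in> {1..n} \<and> i < k \<and> \<tau> = transpose i k})"

definition is_submodule :: "nat \<Rightarrow> ((nat \<Rightarrow> nat) \<Rightarrow> mpoly) set \<Rightarrow> bool" where
  "is_submodule n M \<longleftrightarrow> M \<subseteq> HH n \<and> 0 \<in> M \<and> (\<forall>f\<in>M. \<forall>g\<in>M. f + g \<in> M)
     \<and> (\<forall>p \<in> polys n. \<forall>f\<in>M. const n p * f \<in> M)"

definition dot_stable :: "nat \<Rightarrow> ((nat \<Rightarrow> nat) \<Rightarrow> mpoly) set \<Rightarrow> bool" where
  "dot_stable n M \<longleftrightarrow> (\<forall>w \<in> Sn n. \<forall>f \<in> M. dot n w f \<in> M)"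

end

theory Submission
  imports Defs
begin

lemma update_eq_add_single:
  "a \<notin> Poly_Mapping.keys f \<Longrightarrow> Poly_Mapping.update a b f = f + Poly_Mapping.single a b"
  by (rule poly_mapping_eqI) (auto simp: lookup_update lookup_add lookup_single when_def in_keys_iff)

lemma poly_induct:
  assumes "P 0" "\<And>a b. P (Poly_Mapping.single a b)" "\<And>f g. P f \<Longrightarrow> P g \<Longrightarrow> P (f + g)"
  shows "P x"
proof (induction x rule: update_induct)
  case const
  then show ?case using assms(1) .
next
  case (update f a b)
  then show ?case using assms(2,3) by (simp add: update_eq_add_single)
qed

definition hom :: "((nat \<Rightarrow>\<^sub>0 nat) \<Rightarrow> (nat \<Rightarrow>\<^sub>0 nat)) \<Rightarrow> ((nat \<Rightarrow>\<^sub>0 nat) \<Rightarrow> complex) \<Rightarrow> mpoly \<Rightarrow> mpoly" where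
  "hom \<phi> c P = (\<Sum>m\<in>Poly_Mapping.keys P. Poly_Mapping.single (\<phi> m) (c m * Poly_Mapping.lookup P m))"

lemma hom_superset:
  assumes "finite S" "Poly_Mapping.keys P \<subseteq> S"
  shows "hom \<phi> c P = (\<Sum>m\<in>S. Poly_Mapping.single (\<phi> m) (c m * Poly_Mapping.lookup P m))"
  unfolding hom_def
  by (rule sum.mono_neutral_left) (use assms in \<open>auto simp: in_keys_iff\<close>)

lemma hom_zero [simp]: "hom \<phi> c 0 = 0"
  by (simp add: hom_def)

lemma hom_add: "hom \<phi> c (P + Q) = hom \<phi> c P + hom \<phi> c Q"
proof -
  let ?S = "Poly_Mapping.keys P \<union> Poly_Mapping.keys Q"
  have f: "finite ?S" by simp
  have "hom \<phi> c (P + Q) = (\<Sum>m\<in>?S. Poly_Mapping.single (\<phi> m) (c m * Poly_Mapping.lookup (P+Q) m))"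
    using keys_add[of P Q] by (intro hom_superset) auto
  also have "\<dots> = (\<Sum>m\<in>?S. Poly_Mapping.single (\<phi> m) (c m * Poly_Mapping.lookup P m))
     + (\<Sum>m\<in>?S. Poly_Mapping.single (\<phi> m) (c m * Poly_Mapping.lookup Q m))"
    by (simp add: lookup_add distrib_left single_add sum.distrib)
  also have "\<dots> = hom \<phi> c P + hom \<phi> c Q"
    by (subst (1 2) hom_superset[OF f]) auto
  finally show ?thesis .
qed

lemma hom_single: "hom \<phi> c (Poly_Mapping.single a b) = Poly_Mapping.single (\<phi> a) (c a * b)"
  by (cases "b = 0") (auto simp: hom_def)

lemma hom_uminus: "hom \<phi> c (- P) = - hom \<phi> c P"
proof -
  have "hom \<phi> c P + hom \<phi> c (-P) = 0" using hom_add[of \<phi> c P "-P"] by simp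
  then show ?thesis by (metis add_eq_0_iff2 add_eq_0_iff)
qed

lemma hom_diff: "hom \<phi> c (P - Q) = hom \<phi> c P - hom \<phi> c Q"
  using hom_add[of \<phi> c P "-Q"] hom_uminus[of \<phi> c Q] by simp

lemma hom_mult:
  assumes "\<And>x y. \<phi> (x + y) = \<phi> x + \<phi> y" "\<And>x y. c (x + y) = c x * c y"
  shows "hom \<phi> c (P * Q) = hom \<phi> c P * hom \<phi> c Q"
proof (induction P rule: poly_induct)
  case 1
  then show ?case by simp
next
  case (2 a b)
  show ?case
  proof (induction Q rule: poly_induct)
    case 1
    then show ?case by simp
  next
    case (2 a' b')
    then show ?case by (simp add: mult_single hom_single assms mult_ac)
  next
    case (3 f g)
    then show ?case by (simp add: distrib_left hom_add)
  qed
next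
  case (3 f g)
  then show ?case by (simp add: distrib_right hom_add)
qed

lemma hom_one: "\<phi> 0 = 0 \<Longrightarrow> c 0 = 1 \<Longrightarrow> hom \<phi> c 1 = 1"
  using hom_single[of \<phi> c 0 1] by simp

lemma lookup_hom: "Poly_Mapping.lookup (hom \<phi> c P) m' =
   (\<Sum>m\<in>Poly_Mapping.keys P. if \<phi> m = m' then c m * Poly_Mapping.lookup P m else 0)"
  by (simp add: hom_def lookup_sum lookup_single when_def)

lemma keys_hom: "Poly_Mapping.keys (hom \<phi> c P) \<subseteq> \<phi> ` {m \<in> Poly_Mapping.keys P. c m \<noteq> 0}"
proof -
  have "Poly_Mapping.keys (hom \<phi> c P) \<subseteq> (\<Union>m\<in>Poly_Mapping.keys P. Poly_Mapping.keys (Poly_Mapping.single (\<phi> m) (c m * Poly_Mapping.lookup P m)))"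
    unfolding hom_def by (rule keys_sum)
  also have "\<dots> \<subseteq> \<phi> ` {m \<in> Poly_Mapping.keys P. c m \<noteq> 0}"
    by (auto split: if_splits)
  finally show ?thesis .
qed

lemma Var_pow: "Var j ^ e = Poly_Mapping.single (Poly_Mapping.single j e) 1"
proof (induction e)
  case 0
  then show ?case by simp
next
  case (Suc e)
  then show ?case by (simp add: Var_def mult_single single_add[symmetric])
qed

lemma Var_inj: "Var a = Var b \<longleftrightarrow> a = b"
proof
  assume "Var a = Var b"
  then have "Poly_Mapping.lookup (Var a) (Poly_Mapping.single a 1) = Poly_Mapping.lookup (Var b) (Poly_Mapping.single a 1)" by simp
  then have "Poly_Mapping.single b (1::nat) = Poly_Mapping.single a 1"
    by (simp add: Var_def lookup_single when_def split: if_splits)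
  then have "Poly_Mapping.lookup (Poly_Mapping.single b (1::nat)) a = Poly_Mapping.lookup (Poly_Mapping.single a 1) a" by simp
  then show "a = b" by (simp add: lookup_single when_def split: if_splits)
qed simp

lemma Var_diff_nz: "a \<noteq> b \<Longrightarrow> Var a - Var b \<noteq> 0"
  by (simp add: Var_inj)

lemma dvd_power_diff: "(x - y) dvd (x ^ e - (y::'a::comm_ring_1) ^ e)"
proof (cases e)
  case 0
  then show ?thesis by simp
next
  case (Suc k)
  then show ?thesis using diff_power_eq_sum[of x k y] by (simp add: dvd_def) blast
qed

definition mv :: "nat \<Rightarrow> nat \<Rightarrow> (nat \<Rightarrow>\<^sub>0 nat) \<Rightarrow> (nat \<Rightarrow>\<^sub>0 nat)" where
  "mv q p m = Poly_Mapping.update q 0 m + Poly_Mapping.single p (Poly_Mapping.lookup m q)"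

lemma mv_add: "mv q p (x + y) = mv q p x + mv q p y"
  by (rule poly_mapping_eqI) (simp add: mv_def lookup_add lookup_update lookup_single when_def)

definition subst :: "nat \<Rightarrow> nat \<Rightarrow> mpoly \<Rightarrow> mpoly" where
  "subst q p = hom (mv q p) (\<lambda>_. 1)"

lemma subst_mult: "subst q p (P * Q) = subst q p P * subst q p Q"
  unfolding subst_def by (rule hom_mult) (simp_all add: mv_add)

lemma subst_diff: "subst q p (P - Q) = subst q p P - subst q p Q"
  unfolding subst_def by (rule hom_diff)

lemma subst_Var: "subst q p (Var j) = Var (if j = q then p else j)"
proof -
  have "mv q p (Poly_Mapping.single j 1) = Poly_Mapping.single (if j = q then p else j) 1"
    by (rule poly_mapping_eqI) (simp add: mv_def lookup_add lookup_update lookup_single when_def)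
  then show ?thesis by (simp add: subst_def Var_def hom_single)
qed

lemma subst_kernel: "(Var q - Var p) dvd (B - subst q p B)"
proof (induction B rule: poly_induct)
  case 1
  then show ?case by (simp add: subst_def)
next
  case (2 m c)
  define e where "e = Poly_Mapping.lookup m q"
  define m0 where "m0 = Poly_Mapping.update q 0 m"
  have m: "m = m0 + Poly_Mapping.single q e"
    by (rule poly_mapping_eqI) (simp add: m0_def e_def lookup_add lookup_update lookup_single when_def)
  have mvm: "mv q p m = m0 + Poly_Mapping.single p e"
    by (simp add: mv_def m0_def e_def)
  have 1: "Poly_Mapping.single m c = Poly_Mapping.single m0 c * Var q ^ e"
    by (subst m) (simp add: Var_pow mult_single)
  have "subst q p (Poly_Mapping.single m c) = Poly_Mapping.single (mv q p m) c"
    by (simp add: subst_def hom_single)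
  also have "\<dots> = Poly_Mapping.single m0 c * Var p ^ e"
    by (simp add: mvm Var_pow mult_single)
  finally have 2: "subst q p (Poly_Mapping.single m c) = Poly_Mapping.single m0 c * Var p ^ e" .
  have "Poly_Mapping.single m c - subst q p (Poly_Mapping.single m c) = Poly_Mapping.single m0 c * (Var q ^ e - Var p ^ e)"
    by (simp only: 2) (simp add: 1 right_diff_distrib)
  then show ?case using dvd_power_diff[of "Var q" "Var p" e] by (simp add: dvd_mult)
next
  case (3 f g)
  have "f + g - subst q p (f + g) = (f - subst q p f) + (g - subst q p g)"
    by (simp add: subst_def hom_add)
  then show ?case using 3 by (metis dvd_add)
qed

lemma prime_like:
  assumes "p \<noteq> q" "c \<noteq> d" "\<not> ({c, d} = {p, q})"
    and "(Var p - Var q) dvd ((Var c - Var d) * B)"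
  shows "(Var p - Var q) dvd B"
proof -
  obtain k where k: "(Var c - Var d) * B = (Var p - Var q) * k" using assms(4) by (auto simp: dvd_def)
  have "subst q p ((Var c - Var d) * B) = 0"
    by (simp add: k subst_mult subst_diff subst_Var)
  then have "(Var (if c = q then p else c) - Var (if d = q then p else d)) * subst q p B = 0"
    by (simp add: subst_mult subst_diff subst_Var)
  moreover have "Var (if c = q then p else c) - Var (if d = q then p else d) \<noteq> 0"
    using assms(1-3) by (intro Var_diff_nz) auto
  ultimately have "subst q p B = 0" by simp
  then have "(Var q - Var p) dvd B" using subst_kernel[of q p B] by simp
  moreover have "Var p - Var q = - (Var q - Var p)" by simp
  ultimately show ?thesis by (simp only: minus_dvd_iff)
qed

lemma keys_add_nat: "Poly_Mapping.keys (m1 + m2 :: nat \<Rightarrow>\<^sub>0 nat) = Poly_Mapping.keys m1 \<union> Poly_Mapping.keys m2"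
  by (auto simp: in_keys_iff lookup_add)

lemma polys_zero [simp]: "0 \<in> polys n"
  by (simp add: polys_def)

lemma polys_single0: "Poly_Mapping.single 0 c \<in> polys n"
  by (simp add: polys_def)

lemma polys_one [simp]: "1 \<in> polys n"
  by (simp add: polys_def)

lemma polys_Var: "j \<in> {1..n} \<Longrightarrow> Var j \<in> polys n"
  by (simp add: polys_def Var_def)

lemma polys_add: "P \<in> polys n \<Longrightarrow> Q \<in> polys n \<Longrightarrow> P + Q \<in> polys n"
  using keys_add[of P Q] unfolding polys_def by blast

lemma polys_uminus: "P \<in> polys n \<Longrightarrow> - P \<in> polys n"
  unfolding polys_def by simp

lemma polys_diff: "P \<in> polys n \<Longrightarrow> Q \<in> polys n \<Longrightarrow> P - Q \<in> polys n"
  using polys_add[of P n "-Q"] polys_uminus[of Q n] by simp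

lemma polys_mult: "P \<in> polys n \<Longrightarrow> Q \<in> polys n \<Longrightarrow> P * Q \<in> polys n"
  using keys_mult[of P Q] unfolding polys_def by (force simp: keys_add_nat)

definition restr :: "nat \<Rightarrow> mpoly \<Rightarrow> mpoly" where
  "restr n = hom id (\<lambda>m. if Poly_Mapping.keys m \<subseteq> {1..n} then 1 else 0)"

lemma restr_mult: "restr n (P * Q) = restr n P * restr n Q"
  unfolding restr_def by (rule hom_mult) (auto simp: keys_add_nat)

lemma restr_polys: "P \<in> polys n \<Longrightarrow> restr n P = P"
  apply (rule poly_mapping_eqI)
  apply (simp add: restr_def lookup_hom if_distrib[of "\<lambda>x. x * _"] cong: if_cong)
  apply (auto simp: polys_def in_keys_iff)
  done

lemma restr_in_polys: "restr n P \<in> polys n"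
  using keys_hom[of id "\<lambda>m. if Poly_Mapping.keys m \<subseteq> {1..n} then 1 else 0" P]
  unfolding polys_def restr_def by (auto split: if_splits)

lemma dvd_polys:
  assumes "B \<in> polys n" "p \<in> {1..n}" "q \<in> {1..n}" "B = (Var p - Var q) * k"
  shows "\<exists>k'\<in>polys n. B = (Var p - Var q) * k'"
proof -
  have "restr n B = restr n (Var p - Var q) * restr n k"
    using assms(4) by (simp add: restr_mult)
  then have "B = (Var p - Var q) * restr n k"
    using assms by (simp add: restr_polys polys_diff polys_Var)
  then show ?thesis using restr_in_polys by blast
qed

definition psi :: "(nat \<Rightarrow> nat) \<Rightarrow> (nat \<Rightarrow>\<^sub>0 nat) \<Rightarrow> (nat \<Rightarrow>\<^sub>0 nat)" where
  "psi w m = Abs_poly_mapping (Poly_Mapping.lookup m \<circ> w)"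

lemma lookup_psi:
  assumes "bij w"
  shows "Poly_Mapping.lookup (psi w m) = Poly_Mapping.lookup m \<circ> w"
proof -
  have "{k. (Poly_Mapping.lookup m \<circ> w) k \<noteq> 0} = w -` Poly_Mapping.keys m"
    by (auto simp: in_keys_iff)
  moreover have "finite (w -` Poly_Mapping.keys m)"
    using assms by (intro finite_vimageI) (auto simp: bij_def)
  ultimately show ?thesis unfolding psi_def by simp
qed

lemma psi_add: "bij w \<Longrightarrow> psi w (x + y) = psi w x + psi w y"
  by (rule poly_mapping_eqI) (simp add: lookup_psi lookup_add)

lemma psi_psi_inv: "bij w \<Longrightarrow> psi (inv w) m = m' \<longleftrightarrow> m = psi w m'"
proof -
  assume b: "bij w"
  then have bi: "bij (inv w)" by (simp add: bij_imp_bij_inv)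
  have "psi (inv w) m = m' \<longleftrightarrow> Poly_Mapping.lookup m \<circ> inv w = Poly_Mapping.lookup m'"
    using bi by (simp add: poly_mapping_eq_iff lookup_psi)
  also have "\<dots> \<longleftrightarrow> Poly_Mapping.lookup m = Poly_Mapping.lookup m' \<circ> w"
    using b by (auto simp: fun_eq_iff bij_inv_eq_iff) (metis bij_inv_eq_iff)+
  also have "\<dots> \<longleftrightarrow> m = psi w m'"
    using b by (simp add: poly_mapping_eq_iff lookup_psi)
  finally show ?thesis .
qed

lemma psi_inj: "bij w \<Longrightarrow> inj (psi w)"
  by (metis injI psi_psi_inv)

lemma rename_eq_hom:
  assumes "bij w"
  shows "rename w P = hom (psi (inv w)) (\<lambda>_. 1) P"
proof -
  have fin: "finite {m'. Poly_Mapping.lookup P (psi w m') \<noteq> 0}"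
  proof -
    have "{m'. Poly_Mapping.lookup P (psi w m') \<noteq> 0} = psi w -` Poly_Mapping.keys P"
      by (auto simp: in_keys_iff)
    then show ?thesis using psi_inj[OF assms] by (simp add: finite_vimageI)
  qed
  have r: "rename w P = Abs_poly_mapping (\<lambda>m'. Poly_Mapping.lookup P (psi w m'))"
    unfolding rename_def psi_def by simp
  show ?thesis
  proof (rule poly_mapping_eqI)
    fix m'
    have "Poly_Mapping.lookup (hom (psi (inv w)) (\<lambda>_. 1) P) m' =
       (\<Sum>m\<in>Poly_Mapping.keys P. if m = psi w m' then Poly_Mapping.lookup P m else 0)"
      by (simp add: lookup_hom psi_psi_inv[OF assms])
    also have "\<dots> = Poly_Mapping.lookup P (psi w m')"
      by (simp add: in_keys_iff)
    finally show "Poly_Mapping.lookup (rename w P) m' = Poly_Mapping.lookup (hom (psi (inv w)) (\<lambda>_. 1) P) m'"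
      using fin by (simp add: r)
  qed
qed

lemma rename_mult: "bij w \<Longrightarrow> rename w (P * Q) = rename w P * rename w Q"
  by (simp add: rename_eq_hom hom_mult psi_add bij_imp_bij_inv)

lemma rename_diff: "bij w \<Longrightarrow> rename w (P - Q) = rename w P - rename w Q"
  by (simp add: rename_eq_hom hom_diff)

lemma rename_Var: "bij w \<Longrightarrow> rename w (Var j) = Var (w j)"
proof -
  assume b: "bij w"
  have "psi (inv w) (Poly_Mapping.single j 1) = Poly_Mapping.single (w j) 1"
    using b by (simp add: psi_psi_inv) (rule poly_mapping_eqI; simp add: lookup_psi lookup_single when_def bij_inv_eq_iff bij_def inj_eq)
  then show ?thesis using b by (simp add: rename_eq_hom Var_def hom_single)
qed

lemma rename_polys:
  assumes "w permutes {1..n}" "P \<in> polys n"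
  shows "rename w P \<in> polys n"
proof -
  have b: "bij w" using assms(1) by (rule permutes_bij)
  have bi: "bij (inv w)" using b by (simp add: bij_imp_bij_inv)
  have wi: "inv w permutes {1..n}" using assms(1) by (rule permutes_inv)
  have "Poly_Mapping.keys (psi (inv w) m) \<subseteq> {1..n}" if "m \<in> Poly_Mapping.keys P" for m
  proof
    fix k assume k: "k \<in> Poly_Mapping.keys (psi (inv w) m)"
    show "k \<in> {1..n}"
    proof (rule ccontr)
      assume "k \<notin> {1..n}"
      then have "inv w k = k" using wi by (simp add: permutes_not_in)
      moreover have "Poly_Mapping.lookup m (inv w k) \<noteq> 0" using k bi by (simp add: in_keys_iff lookup_psi)
      ultimately have "k \<in> Poly_Mapping.keys m" by (simp add: in_keys_iff)
      moreover have "Poly_Mapping.keys m \<subseteq> {1..n}" using assms(2) that by (auto simp: polys_def)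
      ultimately show False using \<open>k \<notin> {1..n}\<close> by blast
    qed
  qed
  then show ?thesis
    using keys_hom[of "psi (inv w)" "\<lambda>_. 1" P] unfolding polys_def rename_eq_hom[OF b] by blast
qed

type_synonym hfun = "(nat \<Rightarrow> nat) \<Rightarrow> mpoly"

lemma Sn_comp: "v \<in> Sn n \<Longrightarrow> w \<in> Sn n \<Longrightarrow> v \<circ> w \<in> Sn n"
  by (simp add: Sn_def permutes_compose)

lemma Sn_inv: "w \<in> Sn n \<Longrightarrow> inv w \<in> Sn n"
  by (simp add: Sn_def permutes_inv)

lemma Sn_bij: "w \<in> Sn n \<Longrightarrow> bij w"
  by (simp add: Sn_def permutes_bij)

lemma Sn_range: "w \<in> Sn n \<Longrightarrow> j \<in> {1..n} \<Longrightarrow> w j \<in> {1..n}"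
  using permutes_in_image[of w "{1..n}" j] by (simp add: Sn_def)

lemma transp_Sn: "a \<in> {1..n} \<Longrightarrow> b \<in> {1..n} \<Longrightarrow> transpose a b \<in> Sn n"
  by (simp add: Sn_def permutes_swap_id)

lemma Sn_comp_transp: "v \<in> Sn n \<Longrightarrow> a \<in> {1..n} \<Longrightarrow> b \<in> {1..n} \<Longrightarrow> v \<circ> transpose a b \<in> Sn n"
  by (simp add: Sn_comp transp_Sn)

lemma star_transp: "star n f (transpose a b) = (\<lambda>v. if v \<in> Sn n then f (v \<circ> transpose a b) else 0)"
  unfolding star_def inv_transpose_eq ..

lemma HH_iff: "f \<in> HH n \<longleftrightarrow> (\<forall>v \<in> Sn n. f v \<in> polys n) \<and> (\<forall>v. v \<notin> Sn n \<longrightarrow> f v = 0)"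
  by (simp add: HH_def)

lemma HH_zero [simp]: "0 \<in> HH n" by (simp add: HH_def)
lemma HH_add: "f \<in> HH n \<Longrightarrow> g \<in> HH n \<Longrightarrow> f + g \<in> HH n" by (simp add: HH_def polys_add)
lemma HH_uminus: "f \<in> HH n \<Longrightarrow> - f \<in> HH n" by (simp add: HH_def polys_uminus)
lemma HH_diff: "f \<in> HH n \<Longrightarrow> g \<in> HH n \<Longrightarrow> f - g \<in> HH n" by (simp add: HH_def polys_diff)
lemma HH_mult: "f \<in> HH n \<Longrightarrow> g \<in> HH n \<Longrightarrow> f * g \<in> HH n" by (simp add: HH_def polys_mult)
lemma const_HH: "p \<in> polys n \<Longrightarrow> const n p \<in> HH n" by (simp add: HH_def const_def)
lemma xx_HH: assumes "j \<in> {1..n}" shows "xx n j \<in> HH n"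
proof -
  have "\<forall>v\<in>Sn n. Var (v j) \<in> polys n" using assms by (metis polys_Var Sn_range)
  then show ?thesis by (simp add: HH_iff xx_def)
qed
lemma star_HH: "f \<in> HH n \<Longrightarrow> a \<in> {1..n} \<Longrightarrow> b \<in> {1..n} \<Longrightarrow> star n f (transpose a b) \<in> HH n"
  unfolding HH_iff by (simp add: star_transp Sn_comp_transp del: atLeastAtMost_iff)

lemma HH_out: "f \<in> HH n \<Longrightarrow> v \<notin> Sn n \<Longrightarrow> f v = 0" by (simp add: HH_def)
lemma HH_in: "f \<in> HH n \<Longrightarrow> v \<in> Sn n \<Longrightarrow> f v \<in> polys n" by (simp add: HH_def)

lemma star_add: "star n (f + g) w = star n f w + star n g w"
  by (rule ext) (simp add: star_def)
lemma star_diff: "star n (f - g) w = star n f w - star n g w"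
  by (rule ext) (simp add: star_def)
lemma star_mult: "star n (f * g) w = star n f w * star n g w"
  by (rule ext) (simp add: star_def)
lemma star_zero: "star n 0 w = 0"
  by (rule ext) (simp add: star_def)

lemma star_star: "f \<in> HH n \<Longrightarrow> a \<in> {1..n} \<Longrightarrow> b \<in> {1..n} \<Longrightarrow>
    star n (star n f (transpose a b)) (transpose a b) = f"
  by (rule ext) (auto simp: star_transp Sn_comp_transp comp_assoc HH_out)

lemma star_xx: "a \<in> {1..n} \<Longrightarrow> b \<in> {1..n} \<Longrightarrow> star n (xx n j) (transpose a b) = xx n (transpose a b j)"
  by (rule ext) (auto simp: star_transp Sn_comp_transp xx_def)

lemma star_const: "a \<in> {1..n} \<Longrightarrow> b \<in> {1..n} \<Longrightarrow> star n (const n p) (transpose a b) = const n p"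
  by (rule ext) (auto simp: star_transp Sn_comp_transp const_def)

definition cnd :: "nat \<Rightarrow> hfun \<Rightarrow> nat \<Rightarrow> nat \<Rightarrow> bool" where
  "cnd n f a b \<longleftrightarrow> (\<exists>g\<in>HH n. f - star n f (transpose a b) = (xx n a - xx n b) * g)"

lemma H_C_iff: "f \<in> H_C n C \<longleftrightarrow> f \<in> HH n \<and>
   (\<forall>a b. a \<in> {1..n} \<and> b \<in> {1..n} \<and> a < b \<and> transpose a b \<in> C \<longrightarrow> cnd n f a b)"
  unfolding H_C_def H_tau_def cnd_def by blast

lemma cnd_zero: "cnd n 0 a b"
  unfolding cnd_def by (intro bexI[of _ 0]) (auto simp: star_zero)

lemma cnd_add: "cnd n f a b \<Longrightarrow> cnd n g a b \<Longrightarrow> cnd n (f + g) a b"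
  unfolding cnd_def
proof (elim bexE)
  fix h1 h2 assume h: "h1 \<in> HH n" "h2 \<in> HH n"
    "f - star n f (transpose a b) = (xx n a - xx n b) * h1"
    "g - star n g (transpose a b) = (xx n a - xx n b) * h2"
  have "f + g - star n (f + g) (transpose a b) = (f - star n f (transpose a b)) + (g - star n g (transpose a b))"
    by (simp add: star_add algebra_simps)
  also have "\<dots> = (xx n a - xx n b) * (h1 + h2)"
    by (simp only: h(3,4) distrib_left)
  finally have "f + g - star n (f + g) (transpose a b) = (xx n a - xx n b) * (h1 + h2)" .
  then show "\<exists>g'\<in>HH n. f + g - star n (f + g) (transpose a b) = (xx n a - xx n b) * g'"
    using h by (blast intro: HH_add)
qed

lemma cnd_uminus: "cnd n f a b \<Longrightarrow> cnd n (- f) a b"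
  unfolding cnd_def
proof (elim bexE)
  fix h1 assume h: "h1 \<in> HH n"
    "f - star n f (transpose a b) = (xx n a - xx n b) * h1"
  have "star n (-f) (transpose a b) = - star n f (transpose a b)"
    by (rule ext) (simp add: star_def)
  then have "- f - star n (- f) (transpose a b) = - (f - star n f (transpose a b))"
    by (simp add: algebra_simps)
  also have "\<dots> = (xx n a - xx n b) * (- h1)"
    by (simp only: h(2)) simp
  finally have "- f - star n (- f) (transpose a b) = (xx n a - xx n b) * (- h1)" .
  then show "\<exists>g'\<in>HH n. - f - star n (- f) (transpose a b) = (xx n a - xx n b) * g'"
    using h by (blast intro: HH_uminus)
qed

lemma cnd_diff: "cnd n f a b \<Longrightarrow> cnd n g a b \<Longrightarrow> cnd n (f - g) a b"
  using cnd_add[of n f a b "- g"] cnd_uminus[of n g a b] by simp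

lemma cnd_mult:
  assumes "f \<in> HH n" "g \<in> HH n" "a \<in> {1..n}" "b \<in> {1..n}" "cnd n f a b" "cnd n g a b"
  shows "cnd n (f * g) a b"
proof -
  let ?sf = "star n f (transpose a b)" and ?sg = "star n g (transpose a b)"
  obtain h1 where h1: "h1 \<in> HH n" "f - ?sf = (xx n a - xx n b) * h1" using assms(5) by (auto simp: cnd_def)
  obtain h2 where h2: "h2 \<in> HH n" "g - ?sg = (xx n a - xx n b) * h2" using assms(6) by (auto simp: cnd_def)
  have "f * g - star n (f * g) (transpose a b) = (f - ?sf) * g + ?sf * (g - ?sg)"
    by (simp add: star_mult algebra_simps)
  also have "\<dots> = ((xx n a - xx n b) * h1) * g + ?sf * ((xx n a - xx n b) * h2)"
    by (simp only: h1(2) h2(2))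
  also have "\<dots> = (xx n a - xx n b) * (h1 * g + ?sf * h2)"
    by (simp add: algebra_simps)
  finally show ?thesis unfolding cnd_def
    using h1(1) h2(1) assms by (blast intro: HH_add HH_mult star_HH)
qed

lemma const_one_mult: "f \<in> HH n \<Longrightarrow> f * const n 1 = f"
  by (rule ext) (auto simp: const_def HH_out)

lemma cnd_const: "a \<in> {1..n} \<Longrightarrow> b \<in> {1..n} \<Longrightarrow> cnd n (const n p) a b"
  unfolding cnd_def by (intro bexI[of _ 0]) (auto simp: star_const)

lemma cnd_xx:
  assumes "a \<in> {1..n}" "b \<in> {1..n}" "a \<noteq> b"
  shows "cnd n (xx n j) a b"
proof -
  have D: "xx n a - xx n b \<in> HH n" using assms by (simp add: HH_diff xx_HH)
  have e: "xx n j - star n (xx n j) (transpose a b) = xx n j - xx n (transpose a b j)"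
    using assms by (simp add: star_xx)
  show ?thesis
  proof (cases "j = a")
    case True
    then show ?thesis unfolding cnd_def e using assms D const_one_mult[OF D]
      by (intro bexI[of _ "const n 1"]) (auto intro: const_HH)
  next
    case False
    note F = False
    show ?thesis
    proof (cases "j = b")
      case True
      have "xx n j - xx n (transpose a b j) = (xx n a - xx n b) * (- const n 1)"
        using True const_one_mult[OF D] by (simp add: algebra_simps)
      then show ?thesis unfolding cnd_def e
        by (intro bexI[of _ "- const n 1"] HH_uminus const_HH polys_one)
    next
      case False
      then show ?thesis unfolding cnd_def e using F
        by (intro bexI[of _ 0]) auto
    qed
  qed
qed

lemma cnd_sym: "cnd n f a b \<Longrightarrow> cnd n f b a"
  unfolding cnd_def
proof (elim bexE)
  fix h assume h: "h \<in> HH n" "f - star n f (transpose a b) = (xx n a - xx n b) * h"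
  have "transpose b a = transpose a b" by (rule transpose_commute)
  then have "f - star n f (transpose b a) = (xx n a - xx n b) * h"
    using h(2) by simp
  also have "\<dots> = (xx n b - xx n a) * (- h)" by (simp add: algebra_simps)
  finally have "f - star n f (transpose b a) = (xx n b - xx n a) * (- h)" .
  then show "\<exists>g\<in>HH n. f - star n f (transpose b a) = (xx n b - xx n a) * g"
    using h(1) by (blast intro: HH_uminus)
qed

lemma dot_HH:
  assumes "w \<in> Sn n" "f \<in> HH n" shows "dot n w f \<in> HH n"
  unfolding HH_iff
proof (intro conjI ballI allI impI)
  fix v assume v: "v \<in> Sn n"
  then have "inv w \<circ> v \<in> Sn n" using assms(1) by (simp add: Sn_comp Sn_inv)
  then have "f (inv w \<circ> v) \<in> polys n" using assms(2) by (rule HH_in[rotated])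
  moreover have "w permutes {1..n}" using assms(1) by (simp add: Sn_def)
  ultimately show "dot n w f v \<in> polys n" using v by (simp add: dot_def rename_polys)
next
  fix v assume "v \<notin> Sn n" then show "dot n w f v = 0" by (simp add: dot_def)
qed

lemma dot_mult: "w \<in> Sn n \<Longrightarrow> dot n w (f * g) = dot n w f * dot n w g"
  by (rule ext) (simp add: dot_def rename_mult Sn_bij)

lemma dot_diff: "w \<in> Sn n \<Longrightarrow> dot n w (f - g) = dot n w f - dot n w g"
  by (rule ext) (simp add: dot_def rename_diff Sn_bij)

lemma dot_xx: "w \<in> Sn n \<Longrightarrow> dot n w (xx n j) = xx n j"
proof (rule ext)
  fix v assume w: "w \<in> Sn n"
  show "dot n w (xx n j) v = xx n j v"
  proof (cases "v \<in> Sn n")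
    case True
    then have "inv w \<circ> v \<in> Sn n" using w by (simp add: Sn_comp Sn_inv)
    then show ?thesis using True w
      by (simp add: dot_def xx_def rename_Var Sn_bij bij_inv_eq_iff[symmetric])
        (metis Sn_bij bij_inv_eq_iff)
  next
    case False
    then show ?thesis by (simp add: dot_def xx_def)
  qed
qed

lemma dot_star:
  assumes "w \<in> Sn n" "a \<in> {1..n}" "b \<in> {1..n}"
  shows "star n (dot n w f) (transpose a b) = dot n w (star n f (transpose a b))"
proof (rule ext)
  fix v
  show "star n (dot n w f) (transpose a b) v = dot n w (star n f (transpose a b)) v"
  proof (cases "v \<in> Sn n")
    case True
    then have "inv w \<circ> v \<in> Sn n" "v \<circ> transpose a b \<in> Sn n" using assms by (simp_all add: Sn_comp Sn_inv Sn_comp_transp)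
    then show ?thesis using True by (simp add: star_transp dot_def o_assoc)
  next
    case False
    then show ?thesis by (simp add: star_transp dot_def)
  qed
qed

lemma cnd_dot:
  assumes "w \<in> Sn n" "a \<in> {1..n}" "b \<in> {1..n}" "cnd n f a b"
  shows "cnd n (dot n w f) a b"
proof -
  obtain h where h: "h \<in> HH n" "f - star n f (transpose a b) = (xx n a - xx n b) * h"
    using assms(4) by (auto simp: cnd_def)
  have "dot n w f - star n (dot n w f) (transpose a b) = dot n w (f - star n f (transpose a b))"
    using assms by (simp add: dot_star dot_diff)
  also have "\<dots> = (xx n a - xx n b) * dot n w h"
    using assms by (simp add: h(2) dot_mult dot_diff dot_xx)
  finally show ?thesis unfolding cnd_def using h(1) assms(1) by (blast intro: dot_HH)
qed

lemma HC_HH: "f \<in> H_C n C \<Longrightarrow> f \<in> HH n"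
  by (simp add: H_C_iff)

lemma HC_zero: "0 \<in> H_C n C"
  by (simp add: H_C_iff cnd_zero)

lemma HC_add: "f \<in> H_C n C \<Longrightarrow> g \<in> H_C n C \<Longrightarrow> f + g \<in> H_C n C"
  by (simp add: H_C_iff cnd_add HH_add)

lemma HC_diff: "f \<in> H_C n C \<Longrightarrow> g \<in> H_C n C \<Longrightarrow> f - g \<in> H_C n C"
  by (simp add: H_C_iff cnd_diff HH_diff)

lemma HC_mult: "f \<in> H_C n C \<Longrightarrow> g \<in> H_C n C \<Longrightarrow> f * g \<in> H_C n C"
  unfolding H_C_iff by (auto intro: cnd_mult HH_mult simp del: atLeastAtMost_iff)

lemma HC_const: "p \<in> polys n \<Longrightarrow> const n p \<in> H_C n C"
  unfolding H_C_iff by (auto intro: cnd_const const_HH simp del: atLeastAtMost_iff)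

lemma HC_xx: "j \<in> {1..n} \<Longrightarrow> xx n j \<in> H_C n C"
  unfolding H_C_iff by (auto intro: cnd_xx xx_HH simp del: atLeastAtMost_iff)

lemma HC_dot: "w \<in> Sn n \<Longrightarrow> f \<in> H_C n C \<Longrightarrow> dot n w f \<in> H_C n C"
  unfolding H_C_iff by (auto intro: cnd_dot dot_HH simp del: atLeastAtMost_iff)

lemma star_HC:
  assumes i: "i \<in> {1..n}" "i + 1 \<in> {1..n}"
    and stab: "(\<lambda>c. transpose i (i+1) \<circ> c \<circ> transpose i (i+1)) ` C = C"
    and f: "f \<in> H_C n C"
  shows "star n f (transpose i (i+1)) \<in> H_C n C"
  unfolding H_C_iff
proof (intro conjI allI impI)
  let ?s = "transpose i (i+1)"
  have fH: "f \<in> HH n" using f by (simp add: H_C_iff)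
  then show "star n f ?s \<in> HH n" using i by (simp add: star_HH)
  fix a b assume ab: "a \<in> {1..n} \<and> b \<in> {1..n} \<and> a < b \<and> transpose a b \<in> C"
  let ?a = "?s a" and ?b = "?s b"
  have sS: "?s \<in> Sn n" using i by (rule transp_Sn)
  have a'b': "?a \<in> {1..n}" "?b \<in> {1..n}" using ab sS Sn_range by blast+
  have neq: "?a \<noteq> ?b" using ab by (auto simp: transpose_eq_iff)
  have comm: "transpose a b \<circ> ?s = ?s \<circ> transpose ?a ?b"
    using transpose_comp_eq[of ?s a b] by simp
  have "?s \<circ> transpose a b \<circ> ?s = ?s \<circ> (transpose a b \<circ> ?s)" by (simp only: comp_assoc)
  also have "\<dots> = ?s \<circ> (?s \<circ> transpose ?a ?b)" by (simp only: comm)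
  also have "\<dots> = transpose ?a ?b" by (simp only: comp_assoc[symmetric] transpose_comp_involutory id_comp)
  finally have conj: "?s \<circ> transpose a b \<circ> ?s = transpose ?a ?b" .
  have "transpose ?a ?b \<in> C" using ab stab conj by (metis image_eqI)
  then have "cnd n f ?a ?b"
  proof (cases "?a < ?b")
    case True
    then show ?thesis using f a'b' \<open>transpose ?a ?b \<in> C\<close> by (simp add: H_C_iff)
  next
    case False
    then have "?b < ?a" using neq by simp
    moreover have "transpose ?b ?a \<in> C" using \<open>transpose ?a ?b \<in> C\<close> by (simp add: transpose_commute)
    ultimately have "cnd n f ?b ?a" using f a'b' by (simp add: H_C_iff)
    then show ?thesis by (rule cnd_sym)
  qed
  then obtain h where h: "h \<in> HH n" "f - star n f (transpose ?a ?b) = (xx n ?a - xx n ?b) * h"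
    by (auto simp: cnd_def)
  have ss: "star n (star n f ?s) (transpose a b) = star n (star n f (transpose ?a ?b)) ?s"
  proof (rule ext)
    fix v
    show "star n (star n f ?s) (transpose a b) v = star n (star n f (transpose ?a ?b)) ?s v"
    proof (cases "v \<in> Sn n")
      case True
      then have "v \<circ> transpose a b \<in> Sn n" "v \<circ> ?s \<in> Sn n" using ab i by (simp_all add: Sn_comp_transp)
      moreover have "v \<circ> transpose a b \<circ> ?s = v \<circ> ?s \<circ> transpose ?a ?b"
        using comm by (simp add: comp_assoc)
      ultimately show ?thesis using True by (simp add: star_transp)
    qed (simp add: star_transp)
  qed
  have "star n f ?s - star n (star n f ?s) (transpose a b) = star n (f - star n f (transpose ?a ?b)) ?s"
    by (simp only: ss star_diff)
  also have "\<dots> = star n ((xx n ?a - xx n ?b) * h) ?s" by (simp only: h(2))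
  also have "\<dots> = (star n (xx n ?a) ?s - star n (xx n ?b) ?s) * star n h ?s" by (simp only: star_mult star_diff)
  also have "\<dots> = (xx n a - xx n b) * star n h ?s"
    using i by (simp only: star_xx transpose_involutory)
  finally show "cnd n (star n f ?s) a b"
    unfolding cnd_def using h(1) i by (blast intro: star_HH)
qed

lemma star_D:
  assumes i: "i \<in> {1..n}" "i + 1 \<in> {1..n}"
  shows "star n (xx n i - xx n (i+1)) (transpose i (i+1)) = - (xx n i - xx n (i+1))"
  using i by (simp add: star_diff star_xx)

lemma D_nz:
  assumes "v \<in> Sn n"
  shows "(xx n i - xx n (i+1)) v \<noteq> 0"
proof -
  have "v i \<noteq> v (i+1)" using Sn_bij[OF assms] by (simp add: bij_def inj_eq)
  then show ?thesis using assms by (simp add: xx_def Var_inj)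
qed

lemma half_sum: "Poly_Mapping.single 0 (1/2) + Poly_Mapping.single 0 (1/2) = (1::mpoly)"
  by (simp add: single_add[symmetric])

lemma key_star:
  assumes i: "i \<in> {1..n}" "i + 1 \<in> {1..n}"
    and fH: "f \<in> HH n"
    and g: "g \<in> HH n" "f - star n f (transpose i (i+1)) = (xx n i - xx n (i+1)) * g"
  shows "star n g (transpose i (i+1)) = g"
proof -
  let ?s = "transpose i (i+1)" and ?D = "xx n i - xx n (i+1)"
  have "star n (f - star n f ?s) ?s = - (f - star n f ?s)"
    using fH i by (simp add: star_diff star_star)
  then have "star n (?D * g) ?s = - (?D * g)" by (simp only: g(2))
  then have "(- ?D) * star n g ?s = - (?D * g)" by (simp only: star_mult star_D[OF i])
  then have "- (?D * star n g ?s) = - (?D * g)" by (simp only: minus_mult_left)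
  then have e: "?D * star n g ?s = ?D * g" by (simp only: neg_equal_iff_equal)
  show ?thesis
  proof (rule ext)
    fix v
    show "star n g ?s v = g v"
    proof (cases "v \<in> Sn n")
      case True
      have "?D v * star n g ?s v = ?D v * g v" using fun_cong[OF e, of v] by simp
      then show ?thesis using D_nz[OF True, of i] by simp
    next
      case False
      then show ?thesis using g(1) by (simp add: star_def HH_out)
    qed
  qed
qed

lemma Ldiv:
  assumes "v \<in> Sn n" "a \<noteq> b"
  shows "(Var (v a) - Var (v b)) dvd (Var (v j) - Var (v (transpose a b j)))"
proof -
  consider "j = a" | "j = b" | "j \<noteq> a \<and> j \<noteq> b" by blast
  then show ?thesis
  proof cases
    case 1 then show ?thesis by simp
  next
    case 2
    then have "Var (v j) - Var (v (transpose a b j)) = - (Var (v a) - Var (v b))" by simp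
    then show ?thesis by (simp only: dvd_minus_iff dvd_refl)
  next
    case 3 then show ?thesis by simp
  qed
qed

lemma key_HC:
  assumes i: "i \<in> {1..n}" "i + 1 \<in> {1..n}"
    and stab: "(\<lambda>c. transpose i (i+1) \<circ> c \<circ> transpose i (i+1)) ` C = C"
    and f: "f \<in> H_C n C"
    and g: "g \<in> HH n" "f - star n f (transpose i (i+1)) = (xx n i - xx n (i+1)) * g"
  shows "g \<in> H_C n C"
  unfolding H_C_iff
proof (intro conjI allI impI)
  let ?s = "transpose i (i+1)" and ?D = "xx n i - xx n (i+1)"
  have fH: "f \<in> HH n" using f by (rule HC_HH)
  have gs: "star n g ?s = g" using key_star[OF i fH g] .
  show "g \<in> HH n" by (rule g(1))
  fix a b assume ab: "a \<in> {1..n} \<and> b \<in> {1..n} \<and> a < b \<and> transpose a b \<in> C"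
  show "cnd n g a b"
  proof (cases "a = i \<and> b = i + 1")
    case True
    then show ?thesis unfolding cnd_def using gs by (intro bexI[of _ 0]) auto
  next
    case False
    let ?t = "transpose a b"
    define F where "F = f - star n f ?s"
    have FC: "F \<in> H_C n C" unfolding F_def using f star_HC[OF i stab f] by (rule HC_diff)
    have "cnd n F a b" using FC ab by (simp add: H_C_iff)
    then obtain k where k: "k \<in> HH n" "F - star n F ?t = (xx n a - xx n b) * k"
      by (auto simp: cnd_def)
    have FD: "F = ?D * g" using g(2) by (simp add: F_def)
    have claim: "\<exists>q. q \<in> polys n \<and> g v - g (v \<circ> ?t) = (Var (v a) - Var (v b)) * q" if v: "v \<in> Sn n" for v
    proof -
      have vt: "v \<circ> ?t \<in> Sn n" by (rule Sn_comp_transp[OF v]) (use ab in blast)+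
      let ?A = "Var (v i) - Var (v (i+1))" and ?A' = "Var (v (?t i)) - Var (v (?t (i+1)))"
      let ?P = "Var (v a) - Var (v b)"
      have k1: "F v - F (v \<circ> ?t) = ?P * k v"
        using fun_cong[OF k(2), of v] v by (simp add: star_transp xx_def)
      have F1: "F v = ?A * g v" using v by (simp add: FD xx_def)
      have F2: "F (v \<circ> ?t) = ?A' * g (v \<circ> ?t)" using vt by (simp add: FD xx_def)
      have ab': "a \<noteq> b" using ab by simp
      have "?P dvd (Var (v i) - Var (v (?t i))) - (Var (v (i+1)) - Var (v (?t (i+1))))"
        using Ldiv[OF v ab', of i] Ldiv[OF v ab', of "i+1"] by (rule dvd_diff)
      moreover have "(Var (v i) - Var (v (?t i))) - (Var (v (i+1)) - Var (v (?t (i+1)))) = ?A - ?A'"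
        by (simp add: algebra_simps)
      ultimately have d1: "?P dvd (?A - ?A')" by metis
      have "?A * (g v - g (v \<circ> ?t)) = (F v - F (v \<circ> ?t)) - (?A - ?A') * g (v \<circ> ?t)"
        by (simp only: F1 F2) (simp add: algebra_simps)
      also have "\<dots> = ?P * k v - (?A - ?A') * g (v \<circ> ?t)" by (simp only: k1)
      finally have eq: "?A * (g v - g (v \<circ> ?t)) = ?P * k v - (?A - ?A') * g (v \<circ> ?t)" .
      have d2: "?P dvd ?A * (g v - g (v \<circ> ?t))"
        unfolding eq by (rule dvd_diff[OF dvd_triv_left dvd_mult2[OF d1]])
      have injv: "inj v" using Sn_bij[OF v] by (simp add: bij_def)
      have n1: "v a \<noteq> v b" using ab' injv by (simp add: inj_eq)
      have n2: "v i \<noteq> v (i+1)" using injv by (simp add: inj_eq)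
      have n3: "\<not> {v i, v (i+1)} = {v a, v b}"
      proof
        assume "{v i, v (i+1)} = {v a, v b}"
        then have "v ` {i, i+1} = v ` {a, b}" by simp
        then have "{i, i+1} = {a, b}" by (simp only: inj_image_eq_iff[OF injv])
        then show False using False ab by (auto simp: doubleton_eq_iff)
      qed
      have "?P dvd (g v - g (v \<circ> ?t))" by (rule prime_like[OF n1 n2 n3 d2])
      then obtain q0 where q0: "g v - g (v \<circ> ?t) = ?P * q0" by (auto simp: dvd_def)
      have "g v \<in> polys n" by (rule HH_in[OF g(1) v])
      moreover have "g (v \<circ> ?t) \<in> polys n" by (rule HH_in[OF g(1) vt])
      ultimately have gp: "g v - g (v \<circ> ?t) \<in> polys n" by (rule polys_diff)
      have va: "v a \<in> {1..n}" by (rule Sn_range[OF v]) (use ab in blast)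
      have vb: "v b \<in> {1..n}" by (rule Sn_range[OF v]) (use ab in blast)
      show ?thesis using dvd_polys[OF gp va vb q0] by blast
    qed
    then have "\<forall>v\<in>Sn n. \<exists>q. q \<in> polys n \<and> g v - g (v \<circ> ?t) = (Var (v a) - Var (v b)) * q" by blast
    from bchoice[OF this] obtain qf where
      qf: "\<forall>v\<in>Sn n. qf v \<in> polys n \<and> g v - g (v \<circ> ?t) = (Var (v a) - Var (v b)) * qf v" by blast
    define h where "h = (\<lambda>v. if v \<in> Sn n then qf v else 0)"
    have hH: "h \<in> HH n" using qf by (simp add: HH_iff h_def)
    have "g - star n g ?t = (xx n a - xx n b) * h"
    proof (rule ext)
      fix v show "(g - star n g ?t) v = ((xx n a - xx n b) * h) v"
      proof (cases "v \<in> Sn n")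
        case True
        then have "g v - g (v \<circ> ?t) = (Var (v a) - Var (v b)) * qf v" using qf by blast
        then show ?thesis using True by (simp add: star_transp h_def xx_def)
      next
        case False
        then show ?thesis using g(1) by (simp add: star_transp h_def xx_def HH_out)
      qed
    qed
    then show ?thesis unfolding cnd_def using hH by blast
  qed
qed

lemma neg_self_zero: "(x::mpoly) = - x \<Longrightarrow> x = 0"
proof -
  assume h: "x = - x"
  have "x + x = x + - x" using h by (rule arg_cong[where f="\<lambda>y. x + y"])
  also have "\<dots> = 0" by (rule add.right_inverse)
  finally have "2 * x = 0" by (simp only: mult_2)
  then have "(2::mpoly) = 0 \<or> x = 0" by (simp only: mult_eq_0_iff)
  moreover have "(2::mpoly) \<noteq> 0" by (rule zero_neq_numeral[symmetric])
  ultimately show "x = 0" by blast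
qed

theorem theorem1:
  fixes n i :: nat and C :: "(nat \<Rightarrow> nat) set"
  assumes "n \<ge> 1" and "1 \<le> i" and "i \<le> n - 1"
    and "\<forall>\<tau> \<in> C. is_transposition n \<tau>"
    and "transpose i (i+1) \<in> C"
    and "(\<lambda>c. transpose i (i+1) \<circ> c \<circ> transpose i (i+1)) ` C = C"
  defines "Hs \<equiv> {f \<in> H_C n C. star n f (transpose i (i+1)) = f}"
  defines "Ha \<equiv> {(xx n i - xx n (i+1)) * f | f. f \<in> Hs}"
  shows "is_submodule n Hs \<and> dot_stable n Hs
       \<and> is_submodule n Ha \<and> dot_stable n Ha
       \<and> H_C n C = {f + g | f g. f \<in> Hs \<and> g \<in> Ha}
       \<and> Hs \<inter> Ha = {0}"
proof -
  let ?s = "transpose i (i+1)" and ?D = "xx n i - xx n (i+1)"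
  have i: "i \<in> {1..n}" "i + 1 \<in> {1..n}" using assms(1-3) by auto
  have i1: "1 \<le> i" "i \<le> n" "1 \<le> i + 1" "i + 1 \<le> n" using i by auto
  note stab = assms(6) and sC = assms(5)
  have DC: "?D \<in> H_C n C" by (intro HC_diff HC_xx i)
  have DH: "?D \<in> HH n" using DC by (rule HC_HH)
  have sD: "star n ?D ?s = - ?D" by (rule star_D[OF i])
  have Hs_iff: "f \<in> Hs \<longleftrightarrow> f \<in> H_C n C \<and> star n f ?s = f" for f by (simp add: Hs_def)
  have Ha_iff: "F \<in> Ha \<longleftrightarrow> (\<exists>f. F = ?D * f \<and> f \<in> Hs)" for F by (auto simp: Ha_def)
  have Hs0: "0 \<in> Hs" by (simp add: Hs_iff HC_zero star_zero)
  have HsH: "f \<in> Hs \<Longrightarrow> f \<in> HH n" for f unfolding Hs_iff using HC_HH by blast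
  have Hs_const: "p \<in> polys n \<Longrightarrow> f \<in> Hs \<Longrightarrow> const n p * f \<in> Hs" for p f
    using i by (simp add: Hs_iff HC_mult HC_const star_mult star_const)
  have Hs_add: "f \<in> Hs \<Longrightarrow> g \<in> Hs \<Longrightarrow> f + g \<in> Hs" for f g
    by (simp add: Hs_iff HC_add star_add)
  have sub1: "is_submodule n Hs"
    unfolding is_submodule_def using Hs0 HsH Hs_const Hs_add by blast
  have dot1: "dot_stable n Hs"
    unfolding dot_stable_def
  proof (intro ballI)
    fix w f assume w: "w \<in> Sn n" and f: "f \<in> Hs"
    have "star n (dot n w f) ?s = dot n w (star n f ?s)" by (rule dot_star[OF w i])
    then show "dot n w f \<in> Hs" using f w by (simp add: Hs_iff HC_dot)
  qed
  have sub2: "is_submodule n Ha"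
    unfolding is_submodule_def
  proof (intro conjI ballI)
    show "Ha \<subseteq> HH n"
    proof
      fix F assume "F \<in> Ha"
      then obtain f where "F = ?D * f" "f \<in> Hs" unfolding Ha_iff by blast
      then show "F \<in> HH n" using HH_mult[OF DH HsH] by blast
    qed
    show "0 \<in> Ha" using Hs0 by (auto simp: Ha_iff intro!: exI[of _ 0])
    fix F G assume F: "F \<in> Ha" and G: "G \<in> Ha"
    then obtain f g where "F = ?D * f" "f \<in> Hs" "G = ?D * g" "g \<in> Hs" by (auto simp: Ha_iff)
    then show "F + G \<in> Ha" using Hs_add by (auto simp: Ha_iff distrib_left intro!: exI[of _ "f + g"])
  next
    fix p F assume p: "p \<in> polys n" and F: "F \<in> Ha"
    then obtain f where f: "F = ?D * f" "f \<in> Hs" unfolding Ha_iff by blast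
    have "const n p * F = ?D * (const n p * f)" unfolding f(1) by (simp only: mult.left_commute)
    then show "const n p * F \<in> Ha" using Hs_const[OF p f(2)] unfolding Ha_iff by blast
  qed
  have dot2: "dot_stable n Ha"
    unfolding dot_stable_def
  proof (intro ballI)
    fix w F assume w: "w \<in> Sn n" and F: "F \<in> Ha"
    then obtain f where f: "F = ?D * f" "f \<in> Hs" by (auto simp: Ha_iff)
    have "dot n w F = ?D * dot n w f" using w by (simp add: f(1) dot_mult dot_diff dot_xx)
    moreover have "dot n w f \<in> Hs" using dot1 w f(2) by (simp add: dot_stable_def)
    ultimately show "dot n w F \<in> Ha" by (auto simp: Ha_iff)
  qed
  have decomp: "H_C n C = {f + g | f g. f \<in> Hs \<and> g \<in> Ha}"
  proof (intro set_eqI iffI)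
    fix f assume f: "f \<in> H_C n C"
    have fH: "f \<in> HH n" using f by (rule HC_HH)
    define fs where "fs = star n f ?s"
    have fsC: "fs \<in> H_C n C" unfolding fs_def by (rule star_HC[OF i stab f])
    have fsH: "fs \<in> HH n" using fsC by (rule HC_HH)
    have "cnd n f i (i+1)" using f sC i by (simp add: H_C_iff)
    then obtain g where g: "g \<in> HH n" "f - star n f ?s = ?D * g" by (auto simp: cnd_def)
    have gs: "star n g ?s = g" by (rule key_star[OF i fH g])
    have gC: "g \<in> H_C n C" by (rule key_HC[OF i stab f g])
    define c :: mpoly where "c = Poly_Mapping.single 0 (1/2)"
    have cp: "c \<in> polys n" unfolding c_def by (rule polys_single0)
    have cc: "c + c = 1" unfolding c_def by (rule half_sum)
    have A: "const n c * (f + fs) \<in> Hs"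
    proof -
      have "star n (const n c * (f + fs)) ?s = const n c * (fs + f)"
        using i fH by (simp add: star_mult star_const star_add fs_def star_star)
      then show ?thesis using f fsC cp by (simp add: Hs_iff HC_mult HC_const HC_add add.commute)
    qed
    have B: "const n c * g \<in> Hs"
      using gC cp gs i by (simp add: Hs_iff HC_mult HC_const star_mult star_const)
    have "f = const n c * (f + fs) + ?D * (const n c * g)"
    proof (rule ext)
      fix v
      show "f v = (const n c * (f + fs) + ?D * (const n c * g)) v"
      proof (cases "v \<in> Sn n")
        case True
        have e: "?D v * g v = f v - fs v" using fun_cong[OF g(2), of v] by (simp add: fs_def)
        have "(const n c * (f + fs) + ?D * (const n c * g)) v = c * (f v + fs v) + ?D v * (c * g v)"
          using True by (simp add: const_def)
        also have "\<dots> = c * (f v + fs v) + c * (?D v * g v)" by (simp only: mult.left_commute)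
        also have "\<dots> = c * (f v + fs v) + c * (f v - fs v)" by (simp only: e)
        also have "\<dots> = (c + c) * f v" by (simp add: algebra_simps)
        also have "\<dots> = f v" by (simp add: cc)
        finally show ?thesis by simp
      next
        case False
        then show ?thesis using fH by (simp add: const_def xx_def HH_out)
      qed
    qed
    moreover have "?D * (const n c * g) \<in> Ha" using B by (auto simp: Ha_iff)
    ultimately show "f \<in> {f + g | f g. f \<in> Hs \<and> g \<in> Ha}" using A by blast
  next
    fix F assume "F \<in> {f + g | f g. f \<in> Hs \<and> g \<in> Ha}"
    then obtain f g where "F = f + ?D * g" "f \<in> Hs" "g \<in> Hs" by (auto simp: Ha_iff)
    then show "F \<in> H_C n C" using DC by (simp add: Hs_iff HC_add HC_mult)
  qed
  have inter: "Hs \<inter> Ha = {0}"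
  proof (intro set_eqI iffI)
    fix F assume F: "F \<in> Hs \<inter> Ha"
    then obtain g where g: "F = ?D * g" "g \<in> Hs" by (auto simp: Ha_iff)
    have "star n F ?s = F" using F by (simp add: Hs_iff)
    have gs: "star n g ?s = g" using g(2) unfolding Hs_iff by blast
    have "star n F ?s = star n ?D ?s * star n g ?s" unfolding g(1) by (rule star_mult)
    also have "\<dots> = - F" unfolding sD gs g(1) by (simp only: minus_mult_left)
    finally have "star n F ?s = - F" .
    moreover note \<open>star n F ?s = F\<close>
    ultimately have "F = - F" by simp
    then have Fv: "F v = - F v" for v by (metis uminus_apply)
    have "F = 0"
    proof (rule ext)
      fix v show "F v = 0 v" using neg_self_zero[OF Fv[of v]] by (simp only: zero_fun_apply)
    qed
    then show "F \<in> {0}" by simp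
  next
    fix F :: hfun assume "F \<in> {0}"
    then show "F \<in> Hs \<inter> Ha" using Hs0 by (auto simp: Ha_iff intro!: exI[of _ 0])
  qed
  show ?thesis using sub1 dot1 sub2 dot2 decomp inter by (intro conjI) assumption+
qed

end
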